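(* Let $m\in\mathbb{Z}_{>0}$, let $X$ be a finite set with $|X|=2m$, $S=\{0,1\}^X$ and $B=\{-1,1\}^X$. Then for every $\varepsilon,\delta\ge0$, $\#\mathsf{CorM}(S,B,\varepsilon,\delta)=0$. However, for the uniform distribution $\mu_X$ over $X$ and every $\varepsilon,\delta\in(0,1/2)$, $\#\mathsf{DCorM}^{\mu_X}(B,S,\varepsilon,\delta)\ge(1/2-\varepsilon)m$.
   Context: Generalized product: $u_1\diamondsuit u_2=u_1u_2$ if $u_2\in[-1,1]$, $-|u_1|$ if $u_2=*$ (here all hypotheses are total). Learners take $n$ points of $X\times[-1,1]$ and output $f:X\to\{-1,1\}$ (possibly randomized). $\mathsf{CorM}_n(S,B,\varepsilon,\delta)$: for every distribution $\mu$ on $X\times[-1,1]$ for which some $s\in S$ has $\Pr_{x\sim\mu|_X}[s(x)\ne*]=1$ and $\mathbb{E}_\mu[y|x]=s(x)$, with probability $\ge1-\delta$ over $n$ i.i.d. samples, $\mathbb{E}_\mu[yf(x)]\ge\sup_{b\in B}\mathbb{E}_\mu[y\diamondsuit b(x)]-\varepsilon$. $\mathsf{DCorM}^{\mu_X}_n(S,B,\varepsilon,\delta)$: the same guarantee but only required for distributions $\mu$ with $\mu|_X=\mu_X$ and $\Pr_\mu[s(x)=y]=1$ for some $s\in S$. $\#\mathsf{CorM}$, $\#\mathsf{DCorM}^{\mu_X}$ are the least $n$ for which such a learner exists. *)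

theory Defs
  imports "HOL-Probability.Probability"
begin

text \<open>Partial hypotheses: a hypothesis is a map X \<Rightarrow> real option, where None stands for the
  undefined value *.  The generalized product.\<close>
definition gprod :: "real \<Rightarrow> real option \<Rightarrow> real" where
  "gprod u1 u2 = (case u2 of Some v \<Rightarrow> u1 * v | None \<Rightarrow> - \<bar>u1\<bar>)"

definition valid_dist :: "('x \<times> real) measure \<Rightarrow> bool" where
  "valid_dist \<mu> \<longleftrightarrow> prob_space \<mu> \<and> sets \<mu> = sets (count_space UNIV \<Otimes>\<^sub>M borel)
     \<and> (AE z in \<mu>. snd z \<in> {-1..1})"

text \<open>s is defined almost surely and E[y | x] = s(x) (X is finite, so conditional
  expectation is given by E[y 1{x}] = s(x) Pr[x]).\<close>
definition cond_realizes :: "('x \<Rightarrow> real option) \<Rightarrow> ('x \<times> real) measure \<Rightarrow> bool" where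
  "cond_realizes s \<mu> \<longleftrightarrow> (AE z in \<mu>. s (fst z) \<noteq> None) \<and>
     (\<forall>x v. s x = Some v \<longrightarrow>
        (\<integral>z. snd z * indicator ({x} \<times> UNIV) z \<partial>\<mu>) = v * measure \<mu> ({x} \<times> UNIV))"

definition det_realizes :: "('x \<Rightarrow> real option) \<Rightarrow> ('x \<times> real) measure \<Rightarrow> bool" where
  "det_realizes s \<mu> \<longleftrightarrow> (AE z in \<mu>. s (fst z) = Some (snd z))"

text \<open>A randomized learner with n samples: a map from the sample (indexed by {..<n})
  to a distribution over output functions X \<Rightarrow> {-1,1}.\<close>
definition pm_valued :: "(('x \<Rightarrow> real) pmf) \<Rightarrow> bool" where
  "pm_valued p \<longleftrightarrow> set_pmf p \<subseteq> {f. \<forall>x. f x \<in> {-1, 1}}"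

definition good_output :: "('x \<times> real) measure \<Rightarrow> ('x \<Rightarrow> real option) set \<Rightarrow> real
    \<Rightarrow> ('x \<Rightarrow> real) \<Rightarrow> bool" where
  "good_output \<mu> B \<epsilon> f \<longleftrightarrow>
     (\<integral>z. snd z * f (fst z) \<partial>\<mu>) \<ge> (SUP b\<in>B. \<integral>z. gprod (snd z) (b (fst z)) \<partial>\<mu>) - \<epsilon>"

text \<open>Probability (jointly over the n i.i.d. samples and the learner's randomness) that the
  learner succeeds; the lower (nonnegative) integral is used.\<close>
definition success_prob :: "nat \<Rightarrow> ((nat \<Rightarrow> 'x \<times> real) \<Rightarrow> ('x \<Rightarrow> real) pmf)
    \<Rightarrow> ('x \<times> real) measure \<Rightarrow> ('x \<Rightarrow> real option) set \<Rightarrow> real \<Rightarrow> ennreal" where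
  "success_prob n L \<mu> B \<epsilon> =
     (\<integral>\<^sup>+ \<omega>. ennreal (measure_pmf.prob (L \<omega>) {f. good_output \<mu> B \<epsilon> f}) \<partial>(\<Pi>\<^sub>M i\<in>{..<n}. \<mu>))"

definition CorM :: "nat \<Rightarrow> ('x \<Rightarrow> real option) set \<Rightarrow> ('x \<Rightarrow> real option) set
    \<Rightarrow> real \<Rightarrow> real \<Rightarrow> bool" where
  "CorM n S B \<epsilon> \<delta> \<longleftrightarrow> (\<exists>L. (\<forall>\<omega>. pm_valued (L \<omega>)) \<and>
     (\<forall>\<mu>. valid_dist \<mu> \<and> (\<exists>s\<in>S. cond_realizes s \<mu>) \<longrightarrow>
        success_prob n L \<mu> B \<epsilon> \<ge> ennreal (1 - \<delta>)))"

definition DCorM :: "'x measure \<Rightarrow> nat \<Rightarrow> ('x \<Rightarrow> real option) set \<Rightarrow> ('x \<Rightarrow> real option) set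
    \<Rightarrow> real \<Rightarrow> real \<Rightarrow> bool" where
  "DCorM \<mu>X n S B \<epsilon> \<delta> \<longleftrightarrow> (\<exists>L. (\<forall>\<omega>. pm_valued (L \<omega>)) \<and>
     (\<forall>\<mu>. valid_dist \<mu> \<and> distr \<mu> (count_space UNIV) fst = \<mu>X \<and> (\<exists>s\<in>S. det_realizes s \<mu>) \<longrightarrow>
        success_prob n L \<mu> B \<epsilon> \<ge> ennreal (1 - \<delta>)))"

definition numCorM :: "('x \<Rightarrow> real option) set \<Rightarrow> ('x \<Rightarrow> real option) set \<Rightarrow> real \<Rightarrow> real \<Rightarrow> nat" where
  "numCorM S B \<epsilon> \<delta> = (LEAST n. CorM n S B \<epsilon> \<delta>)"

end

theory Submission
  imports Defs
begin


lemma part1_bound: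
  fixes \<mu> :: "('x::finite \<times> real) measure"
  assumes vd: "valid_dist \<mu>" and cr: "cond_realizes s \<mu>" and sS: "\<forall>x. s x \<in> {Some 0, Some 1}"
    and bB: "\<forall>x. b x \<in> {Some (-1), Some 1}"
  shows "(\<integral>z. gprod (snd z) (b (fst z)) \<partial>\<mu>) \<le> (\<integral>z. snd z * 1 \<partial>\<mu>)"
proof -
  interpret prob_space \<mu> using vd valid_dist_def by auto
  have sets: "sets \<mu> = sets (count_space UNIV \<Otimes>\<^sub>M borel)" using vd by (simp add: valid_dist_def)
  have AEb: "AE z in \<mu>. snd z \<in> {-1..1}" using vd by (simp add: valid_dist_def)
  define bv where "bv x = the (b x)" for x
  define sv where "sv x = the (s x)" for x
  have bv: "bv x \<in> {-1,1}" "b x = Some (bv x)" for x using bB unfolding bv_def by (metis insert_iff option.sel singletonD)+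
  have sv: "sv x \<in> {0,1}" "s x = Some (sv x)" for x using sS unfolding sv_def by (metis insert_iff option.sel singletonD)+
  have meas: "f \<in> borel_measurable \<mu>" if "f \<in> borel_measurable (count_space UNIV \<Otimes>\<^sub>M borel)" for f :: "'x \<times> real \<Rightarrow> real"
    using that by (simp add: measurable_cong_sets[OF sets refl])
  have int: "integrable \<mu> (\<lambda>z. snd z * indicator ({x}\<times>UNIV) z)" for x
  proof (rule integrable_const_bound[where B=1])
    show "AE z in \<mu>. norm (snd z * indicator ({x}\<times>UNIV) z) \<le> 1"
      using AEb by eventually_elim (auto simp: indicator_def)
    show "(\<lambda>z. snd z * indicator ({x}\<times>UNIV) z) \<in> borel_measurable \<mu>"
      by (rule meas) measurable
  qed
  have I: "(\<integral>z. snd z * indicator ({x}\<times>UNIV) z \<partial>\<mu>) = sv x * measure \<mu> ({x}\<times>UNIV)" for x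
    using cr sv(2)[of x] by (simp add: cond_realizes_def)
  have dec: "(\<integral>z. snd z * g (fst z) \<partial>\<mu>) = (\<Sum>x\<in>UNIV. g x * (sv x * measure \<mu> ({x}\<times>UNIV)))"
    for g :: "'x \<Rightarrow> real"
  proof -
    have "(\<integral>z. snd z * g (fst z) \<partial>\<mu>) = (\<integral>z. (\<Sum>x\<in>UNIV. g x * (snd z * indicator ({x}\<times>UNIV) z)) \<partial>\<mu>)"
    proof (rule Bochner_Integration.integral_cong[OF refl])
      fix z :: "'x \<times> real"
      have "(\<Sum>x\<in>UNIV. g x * (snd z * indicator ({x}\<times>UNIV) z)) = (\<Sum>x\<in>UNIV. if x = fst z then g x * snd z else 0)"
        by (intro sum.cong) (auto simp: indicator_def mem_Times_iff)
      also have "\<dots> = g (fst z) * snd z" by simp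
      finally show "snd z * g (fst z) = (\<Sum>x\<in>UNIV. g x * (snd z * indicator ({x}\<times>UNIV) z))" by simp
    qed
    also have "\<dots> = (\<Sum>x\<in>UNIV. g x * (\<integral>z. snd z * indicator ({x}\<times>UNIV) z \<partial>\<mu>))"
      using int by (simp add: integral_sum)
    also have "\<dots> = (\<Sum>x\<in>UNIV. g x * (sv x * measure \<mu> ({x}\<times>UNIV)))" by (simp add: I)
    finally show ?thesis .
  qed
  have "(\<integral>z. gprod (snd z) (b (fst z)) \<partial>\<mu>) = (\<integral>z. snd z * bv (fst z) \<partial>\<mu>)"
    by (simp add: gprod_def bv(2))
  also have "\<dots> = (\<Sum>x\<in>UNIV. bv x * (sv x * measure \<mu> ({x}\<times>UNIV)))" by (rule dec)
  also have "\<dots> \<le> (\<Sum>x\<in>UNIV. 1 * (sv x * measure \<mu> ({x}\<times>UNIV)))"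
  proof (rule sum_mono)
    fix x
    have "0 \<le> sv x * measure \<mu> ({x}\<times>UNIV)" using sv(1)[of x] by auto
    moreover have "bv x \<le> 1" using bv(1)[of x] by auto
    ultimately show "bv x * (sv x * measure \<mu> ({x}\<times>UNIV)) \<le> 1 * (sv x * measure \<mu> ({x}\<times>UNIV))"
      by (rule mult_right_mono[rotated])
  qed
  also have "\<dots> = (\<integral>z. snd z * 1 \<partial>\<mu>)" using dec[of "\<lambda>_. 1"] by simp
  finally show ?thesis .
qed

lemma CorM0:
  fixes S B :: "('x::finite \<Rightarrow> real option) set"
  assumes S: "S = {s. \<forall>x. s x \<in> {Some 0, Some 1}}" and B: "B = {b. \<forall>x. b x \<in> {Some (-1), Some 1}}"
    and "\<epsilon> \<ge> 0" "\<delta> \<ge> 0"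
  shows "CorM 0 S B \<epsilon> \<delta>"
  unfolding CorM_def
proof (intro exI[of _ "\<lambda>_. return_pmf (\<lambda>_. 1)"] conjI allI impI)
  show "pm_valued (return_pmf (\<lambda>_. 1))" for \<omega> :: "nat \<Rightarrow> 'x \<times> real" by (simp add: pm_valued_def)
  fix \<mu> :: "('x \<times> real) measure"
  assume a: "valid_dist \<mu> \<and> (\<exists>s\<in>S. cond_realizes s \<mu>)"
  then obtain s where s: "s \<in> S" "cond_realizes s \<mu>" by auto
  have "(\<lambda>_. Some 1) \<in> B" unfolding B by simp
  then have "B \<noteq> {}" by auto
  have "(SUP b\<in>B. \<integral>z. gprod (snd z) (b (fst z)) \<partial>\<mu>) \<le> (\<integral>z. snd z * 1 \<partial>\<mu>)"
    using \<open>B \<noteq> {}\<close> apply (rule cSUP_least)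
    using part1_bound[of \<mu> s] a s unfolding S B by auto
  then have g: "good_output \<mu> B \<epsilon> (\<lambda>_. 1)" unfolding good_output_def using assms(3) by simp
  show "ennreal (1 - \<delta>) \<le> success_prob 0 (\<lambda>_. return_pmf (\<lambda>_. 1)) \<mu> B \<epsilon>"
    unfolding success_prob_def using g assms(4) by (simp add: PiM_empty)
qed



definition mu :: "('x::finite \<Rightarrow> real) \<Rightarrow> ('x \<times> real) measure" where
  "mu b = distr (measure_pmf (pmf_of_set UNIV)) (count_space UNIV \<Otimes>\<^sub>M borel) (\<lambda>x. (x, b x))"

lemma mu_meas: "(\<lambda>x. (x, b x)) \<in> measurable (measure_pmf (pmf_of_set (UNIV::'x::finite set))) (count_space UNIV \<Otimes>\<^sub>M borel)"
  by (simp add: measurable_cong_sets[OF sets_measure_pmf_count_space refl] space_pair_measure)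

lemma mu_prob: "prob_space (mu (b::'x::finite \<Rightarrow> real))"
  unfolding mu_def by (rule measure_pmf.prob_space_distr[OF mu_meas])

lemma sets_mu[simp]: "sets (mu b) = sets (count_space UNIV \<Otimes>\<^sub>M borel)"
  by (simp add: mu_def)

lemma mu_integral:
  fixes g :: "'x::finite \<times> real \<Rightarrow> real"
  assumes "g \<in> borel_measurable (count_space UNIV \<Otimes>\<^sub>M borel)"
  shows "integral\<^sup>L (mu b) g = (\<Sum>x\<in>UNIV. g (x, b x)) / CARD('x)"
  unfolding mu_def
  by (simp add: integral_distr[OF mu_meas assms] integral_pmf_of_set)

lemma mu_valid: assumes "\<forall>x. b x \<in> {-1,1}" shows "valid_dist (mu (b::'x::finite \<Rightarrow> real))"
proof -
  have h: "-1 \<le> b x \<and> b x \<le> 1" for x using assms[rule_format, of x] by auto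
  have "AE z in mu b. snd z \<in> {-1..1}"
    unfolding mu_def
    apply (subst AE_distr_iff[OF mu_meas])
     apply measurable
    using h by (auto intro!: AE_I2)
  then show ?thesis using mu_prob unfolding valid_dist_def by simp
qed

lemma mu_marg: "distr (mu (b::'x::finite \<Rightarrow> real)) (count_space UNIV) fst = measure_pmf (pmf_of_set UNIV)"
  unfolding mu_def
  apply (subst distr_distr)
    apply measurable
  apply (simp add: comp_def)
  apply (rule distr_id2)
  apply (simp add: sets_measure_pmf_count_space)
  done

lemma mu_det: "det_realizes (\<lambda>x. Some (b x)) (mu (b::'x::finite \<Rightarrow> real))"
proof -
  have "AE z in mu b. b (fst z) = snd z"
    unfolding mu_def
    apply (subst AE_distr_iff[OF mu_meas])
    subgoal by (rule borel_measurable_eq; measurable)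
    by (auto intro!: AE_I2)
  then show ?thesis unfolding det_realizes_def by eventually_elim simp
qed

lemma sing_meas: "{(x, y)} \<in> sets (count_space UNIV \<Otimes>\<^sub>M (borel :: real measure))"
proof -
  have "{x} \<times> {y} \<in> sets (count_space UNIV \<Otimes>\<^sub>M (borel :: real measure))"
    by (rule pair_measureI) auto
  then show ?thesis by simp
qed

lemma mu_single: "emeasure (mu (b::'x::finite \<Rightarrow> real)) {(x, b x)} = ennreal (1 / CARD('x))"
proof -
  have "{(x, b x)} \<in> sets (count_space UNIV \<Otimes>\<^sub>M borel)"
  proof -
    have "{x} \<times> {b x} \<in> sets (count_space UNIV \<Otimes>\<^sub>M borel)"
      by (rule pair_measureI) auto
    then show ?thesis by simp
  qed
  then have "emeasure (mu b) {(x, b x)} = emeasure (measure_pmf (pmf_of_set UNIV)) {x}"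
    unfolding mu_def
    by (subst emeasure_distr[OF mu_meas]) (auto intro!: arg_cong2[where f=emeasure])
  also have "\<dots> = ennreal (1 / CARD('x))"
    by (simp add: emeasure_pmf_of_set ennreal_of_nat_eq_real_of_nat divide_ennreal)
  finally show ?thesis .
qed

definition emb :: "('x \<Rightarrow> real) \<Rightarrow> nat \<Rightarrow> (nat \<Rightarrow> 'x) \<Rightarrow> nat \<Rightarrow> 'x \<times> real" where
  "emb b n xs = (\<lambda>i\<in>{..<n}. (xs i, b (xs i)))"

lemma PiE_single: "\<omega> \<in> Pi\<^sub>E I X \<Longrightarrow> Pi\<^sub>E I (\<lambda>i. {\<omega> i}) = {\<omega>}"
  apply (auto simp: PiE_def extensional_def fun_eq_iff)
  subgoal for x i by (cases "i \<in> I") auto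
  done

lemma success_formula:
  fixes b :: "'x::finite \<Rightarrow> real"
  shows "success_prob n L (mu b) B \<epsilon> = ennreal ((\<Sum>xs\<in>Pi\<^sub>E {..<n} (\<lambda>_. UNIV).
     measure_pmf.prob (L (emb b n xs)) {f. good_output (mu b) B \<epsilon> f}) * (1 / CARD('x)) ^ n)"
proof -
  interpret Mb: prob_space "mu b" by (rule mu_prob)
  interpret P: product_prob_space "\<lambda>_. mu b" "{..<n}" by unfold_locales
  let ?P = "Pi\<^sub>M {..<n} (\<lambda>_. mu b)"
  define G where "G \<omega> = measure_pmf.prob (L \<omega>) {f. good_output (mu b) B \<epsilon> f}" for \<omega>
  define Gr where "Gr = range (\<lambda>x. (x, b x))"
  define E where "E = Pi\<^sub>E {..<n} (\<lambda>_. Gr)"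
  define \<Omega> where "\<Omega> = Pi\<^sub>E {..<n} (\<lambda>_. UNIV :: 'x set)"
  define c where "c = (1 / real CARD('x)) ^ n"
  have Gr_sets: "Gr \<in> sets (mu b)"
  proof -
    have "Gr = (\<Union>x\<in>UNIV. {(x, b x)})" unfolding Gr_def by auto
    then show ?thesis using sing_meas by (auto intro!: sets.finite_UN)
  qed
  have pre: "(\<lambda>x. (x, b x)) -` Gr = UNIV" by (auto simp: Gr_def)
  have "emeasure (mu b) Gr = 1"
    using Gr_sets unfolding mu_def
    by (subst emeasure_distr[OF mu_meas]) (auto simp: pre measure_pmf.emeasure_space_1[simplified])
  then have "emeasure ?P E = 1"
    unfolding E_def using Gr_sets by (simp add: P.emeasure_PiM)
  moreover have E_sets: "E \<in> sets ?P" unfolding E_def using Gr_sets by (auto intro!: sets_PiM_I_finite)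
  ultimately have AE: "AE \<omega> in ?P. \<omega> \<in> E"
    by (intro P.AE_prob_1) (simp add: measure_def)
  have finE: "finite E" unfolding E_def Gr_def by (intro finite_PiE) auto
  have single: "emeasure ?P {\<omega>} = ennreal c" if "\<omega> \<in> E" for \<omega>
  proof -
    have "{\<omega>} = Pi\<^sub>E {..<n} (\<lambda>i. {\<omega> i})" using PiE_single[OF that[unfolded E_def]] by simp
    moreover have "\<omega> i \<in> Gr" if "i < n" for i using \<open>\<omega> \<in> E\<close> that unfolding E_def by auto
    ultimately have "emeasure ?P {\<omega>} = (\<Prod>i\<in>{..<n}. emeasure (mu b) {\<omega> i})"
    proof -
      have "{\<omega> i} \<in> sets (mu b)" for i using sing_meas[of "fst (\<omega> i)" "snd (\<omega> i)"] by simp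
      then show ?thesis using \<open>{\<omega>} = _\<close> by (simp add: P.emeasure_PiM)
    qed
    also have "\<dots> = (\<Prod>i\<in>{..<n}. ennreal (1 / CARD('x)))"
    proof (intro prod.cong refl)
      fix i assume "i \<in> {..<n}"
      then obtain x where "\<omega> i = (x, b x)" using \<open>\<And>i. i < n \<Longrightarrow> \<omega> i \<in> Gr\<close> unfolding Gr_def by auto
      then show "emeasure (mu b) {\<omega> i} = ennreal (1 / CARD('x))" by (simp add: mu_single)
    qed
    also have "\<dots> = ennreal c" by (simp add: c_def ennreal_power)
    finally show ?thesis .
  qed
  have emb_inv: "emb b n (\<lambda>i\<in>{..<n}. fst (\<omega> i)) = \<omega>" if "\<omega> \<in> E" for \<omega>
  proof -
    have "(fst (\<omega> i), b (fst (\<omega> i))) = \<omega> i" if "i < n" for i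
    proof -
      have "\<omega> i \<in> Gr" using \<open>\<omega> \<in> E\<close> that unfolding E_def by auto
      then show ?thesis unfolding Gr_def by auto
    qed
    with \<open>\<omega> \<in> E\<close> show ?thesis
      by (auto simp: E_def emb_def PiE_def extensional_def fun_eq_iff)
  qed
  have "success_prob n L (mu b) B \<epsilon> = (\<integral>\<^sup>+ \<omega>. ennreal (G \<omega>) * indicator E \<omega> \<partial>?P)"
    unfolding success_prob_def G_def
    by (rule nn_integral_cong_AE) (use AE in \<open>auto simp: indicator_def\<close>)
  also have "\<dots> = (\<Sum>\<omega>\<in>E. ennreal (G \<omega>) * emeasure ?P {\<omega>})"
  proof (rule nn_integral_indicator_finite[OF finE])
    fix \<omega> assume "\<omega> \<in> E"
    then have "{\<omega>} = Pi\<^sub>E {..<n} (\<lambda>i. {\<omega> i})" using PiE_single[of \<omega>] unfolding E_def by simp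
    moreover have "{\<omega> i} \<in> sets (mu b)" for i using sing_meas[of "fst (\<omega> i)" "snd (\<omega> i)"] by simp
    ultimately show "{\<omega>} \<in> sets ?P" by (simp add: sets_PiM_I_finite)
  qed
  also have "\<dots> = (\<Sum>\<omega>\<in>E. ennreal (G \<omega> * c))"
    using single by (intro sum.cong) (auto simp: ennreal_mult'' c_def)
  also have "\<dots> = (\<Sum>xs\<in>\<Omega>. ennreal (G (emb b n xs) * c))"
  proof (rule sum.reindex_bij_witness[of _ "emb b n" "\<lambda>\<omega>. \<lambda>i\<in>{..<n}. fst (\<omega> i)"])
    fix xs assume "xs \<in> \<Omega>"
    then show "(\<lambda>i\<in>{..<n}. fst (emb b n xs i)) = xs" "emb b n xs \<in> E"
      by (auto simp: \<Omega>_def E_def Gr_def emb_def PiE_def extensional_def fun_eq_iff)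
  next
    fix \<omega> assume "\<omega> \<in> E"
    then show "emb b n (\<lambda>i\<in>{..<n}. fst (\<omega> i)) = \<omega>" "(\<lambda>i\<in>{..<n}. fst (\<omega> i)) \<in> \<Omega>"
      using emb_inv by (auto simp: \<Omega>_def E_def PiE_def)
  qed (use emb_inv in auto)
  also have "\<dots> = ennreal (\<Sum>xs\<in>\<Omega>. G (emb b n xs) * c)"
    by (rule sum_ennreal) (simp add: c_def G_def)
  finally show ?thesis by (simp add: G_def \<Omega>_def c_def sum_distrib_right)
qed



lemma meas_fs: "(\<lambda>z. snd z * (g::'x::finite \<Rightarrow> real) (fst z)) \<in> borel_measurable (count_space (UNIV::'x set) \<Otimes>\<^sub>M borel)"
proof -
  have 1: "(\<lambda>z. g (fst z)) \<in> borel_measurable (count_space (UNIV::'x set) \<Otimes>\<^sub>M (borel::real measure))"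
    by (rule measurable_compose[OF measurable_fst]) simp
  have 2: "snd \<in> borel_measurable (count_space (UNIV::'x set) \<Otimes>\<^sub>M (borel::real measure))"
    by (rule measurable_snd)
  show ?thesis using borel_measurable_times[OF 2 1] by simp
qed

lemma int_S:
  fixes b :: "'x::finite \<Rightarrow> real"
  assumes "\<forall>x. s x \<in> {Some 0, Some 1}"
  shows "(\<integral>z. gprod (snd z) (s (fst z)) \<partial>mu b) = (\<Sum>x\<in>UNIV. b x * the (s x)) / CARD('x)"
proof -
  have "(\<integral>z. gprod (snd z) (s (fst z)) \<partial>mu b) = (\<integral>z. snd z * the (s (fst z)) \<partial>mu b)"
  proof (rule Bochner_Integration.integral_cong[OF refl])
    fix z :: "'x \<times> real"
    show "gprod (snd z) (s (fst z)) = snd z * the (s (fst z))"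
      using assms[rule_format, of "fst z"] by (auto simp: gprod_def)
  qed
  also have "\<dots> = (\<Sum>x\<in>UNIV. b x * the (s x)) / CARD('x)"
    by (subst mu_integral) (rule meas_fs, simp)
  finally show ?thesis .
qed

lemma good_bound:
  fixes b f :: "'x::finite \<Rightarrow> real"
  assumes S: "S = {s::'x \<Rightarrow> real option. \<forall>x. s x \<in> {Some 0, Some 1}}"
    and b: "\<forall>x. b x \<in> {-1,1}" and good: "good_output (mu b) S \<epsilon> f"
  shows "(\<Sum>x\<in>UNIV. b x * f x - (if b x = 1 then 1 else 0)) \<ge> - real CARD('x) * \<epsilon>"
proof -
  define N where "N = real CARD('x)"
  have N: "N > 0" unfolding N_def by simp
  have I1: "(\<integral>z. snd z * f (fst z) \<partial>mu b) = (\<Sum>x\<in>UNIV. b x * f x) / N"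
    unfolding N_def by (subst mu_integral) (rule meas_fs, simp)
  define s0 where "s0 = (\<lambda>x. Some (if b x = 1 then 1 else 0 :: real))"
  have s0: "s0 \<in> S" unfolding S s0_def by auto
  have bdd: "bdd_above ((\<lambda>s. \<integral>z. gprod (snd z) (s (fst z)) \<partial>mu b) ` S)"
  proof (rule bdd_aboveI2)
    fix s assume "s \<in> S"
    then have sS: "\<forall>x. s x \<in> {Some 0, Some 1}" unfolding S by simp
    have "b x * the (s x) \<le> 1" for x using sS[rule_format, of x] b[rule_format, of x] by auto
    then have "(\<Sum>x\<in>UNIV. b x * the (s x)) \<le> N" unfolding N_def using sum_bounded_above[of UNIV "\<lambda>x. b x * the (s x)" 1] by simp
    then have "(\<Sum>x\<in>UNIV. b x * the (s x)) / N \<le> 1" using N by (simp add: N_def)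
    then show "(\<integral>z. gprod (snd z) (s (fst z)) \<partial>mu b) \<le> 1" using int_S[OF sS, of b] by (simp add: N_def)
  qed
  have "(\<integral>z. gprod (snd z) (s0 (fst z)) \<partial>mu b) \<le> (SUP s\<in>S. \<integral>z. gprod (snd z) (s (fst z)) \<partial>mu b)"
    by (rule cSUP_upper[OF s0 bdd])
  moreover have "(\<integral>z. gprod (snd z) (s0 (fst z)) \<partial>mu b) = (\<Sum>x\<in>UNIV. (if b x = 1 then 1 else 0)) / N"
    using int_S[of s0 b] unfolding N_def s0_def by (auto intro!: arg_cong[where f="\<lambda>x. x / _"] sum.cong)
  ultimately have "(\<Sum>x\<in>UNIV. b x * f x) / N \<ge> (\<Sum>x\<in>UNIV. (if b x = 1 then 1 else 0)) / N - \<epsilon>"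
    using good I1 unfolding good_output_def by simp
  then have ineq: "(\<Sum>x\<in>UNIV. (if b x = 1 then 1 else 0)) / N \<le> (\<Sum>x\<in>UNIV. b x * f x) / N + \<epsilon>"
    by simp
  have "(\<Sum>x\<in>UNIV. (if b x = 1 then 1 else 0)) = N * ((\<Sum>x\<in>UNIV. (if b x = 1 then 1 else 0)) / N)"
    using N by simp
  also have "\<dots> \<le> N * ((\<Sum>x\<in>UNIV. b x * f x) / N + \<epsilon>)"
    by (rule mult_left_mono) (use ineq N in auto)
  also have "\<dots> = (\<Sum>x\<in>UNIV. b x * f x) + N * \<epsilon>" using N by (simp add: field_simps)
  finally have "(\<Sum>x\<in>UNIV. b x * f x) \<ge> (\<Sum>x\<in>UNIV. (if b x = 1 then 1 else 0)) - N * \<epsilon>"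
    by simp
  then show ?thesis by (simp add: sum_subtractf N_def)
qed



definition flip :: "'x set \<Rightarrow> ('x \<Rightarrow> real) \<Rightarrow> 'x \<Rightarrow> real" where
  "flip R b = (\<lambda>x. if x \<in> R then b x else - b x)"

lemma pair_bad:
  fixes b f :: "'x::finite \<Rightarrow> real" and R :: "'x set"
  assumes S: "S = {s::'x \<Rightarrow> real option. \<forall>x. s x \<in> {Some 0, Some 1}}"
    and b: "\<forall>x. b x \<in> {-1,1}" and f: "\<forall>x. f x \<in> {-1,1}"
    and R: "card R \<le> n" and n: "3 * real n < real CARD('x) * (1 - 2 * \<epsilon>)"
    and g1: "good_output (mu b) S \<epsilon> f" and g2: "good_output (mu (flip R b)) S \<epsilon> f"
  shows False
proof -
  define N where "N = real CARD('x)"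
  have b': "\<forall>x. flip R b x \<in> {-1,1}" using b by (auto simp: flip_def)
  define t where "t c x = c x * f x - (if c x = 1 then 1 else 0)" for c :: "'x \<Rightarrow> real" and x
  have 1: "(\<Sum>x\<in>UNIV. t b x) \<ge> - N * \<epsilon>" using good_bound[OF S b g1] unfolding t_def N_def .
  have 2: "(\<Sum>x\<in>UNIV. t (flip R b) x) \<ge> - N * \<epsilon>" using good_bound[OF S b' g2] unfolding t_def N_def .
  have pw: "t b x + t (flip R b) x \<le> (if x \<in> R then 2 else -1)" for x
    using b[rule_format, of x] f[rule_format, of x] by (auto simp: t_def flip_def)
  have "(\<Sum>x\<in>UNIV. t b x + t (flip R b) x) \<le> (\<Sum>x\<in>UNIV. (if x \<in> R then 2 else -1 :: real))"
    by (rule sum_mono) (rule pw)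
  also have "\<dots> = 2 * real (card R) - real (card (- R))"
    by (simp add: sum.If_cases Int_def Compl_eq)
  also have "\<dots> = 3 * real (card R) - N"
    unfolding N_def by (simp add: Compl_eq_Diff_UNIV card_Diff_subset of_nat_diff card_mono)
  finally have "- 2 * N * \<epsilon> \<le> 3 * real (card R) - N" using 1 2 by (simp add: sum.distrib)
  moreover have "3 * real (card R) \<le> 3 * real n" using R by simp
  ultimately show False using n unfolding N_def by (simp add: algebra_simps)
qed



lemma pair_sum:
  fixes L :: "(nat \<Rightarrow> 'x::finite \<times> real) \<Rightarrow> ('x \<Rightarrow> real) pmf"
  assumes S: "S = {s::'x \<Rightarrow> real option. \<forall>x. s x \<in> {Some 0, Some 1}}"
    and L: "\<forall>\<omega>. pm_valued (L \<omega>)"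
    and n: "3 * real n < real CARD('x) * (1 - 2 * \<epsilon>)"
    and F: "F = {b :: 'x \<Rightarrow> real. \<forall>x. b x \<in> {-1,1}}"
  shows "(\<Sum>b\<in>F. measure_pmf.prob (L (emb b n xs)) {f. good_output (mu b) S \<epsilon> f}) \<le> real (card F) / 2"
proof -
  define R where "R = xs ` {..<n}"
  have R: "card R \<le> n" unfolding R_def using card_image_le[of "{..<n}" xs] by simp
  define h where "h b = measure_pmf.prob (L (emb b n xs)) {f. good_output (mu b) S \<epsilon> f}" for b
  have flipF: "flip R b \<in> F" if "b \<in> F" for b using that unfolding F flip_def by auto
  have flip2: "flip R (flip R b) = b" for b by (auto simp: flip_def)
  have embf: "emb (flip R b) n xs = emb b n xs" for b by (auto simp: emb_def flip_def R_def)
  have le1: "h b + h (flip R b) \<le> 1" if "b \<in> F" for b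
  proof -
    let ?p = "L (emb b n xs)"
    define A where "A = {f. good_output (mu b) S \<epsilon> f} \<inter> set_pmf ?p"
    define A' where "A' = {f. good_output (mu (flip R b)) S \<epsilon> f} \<inter> set_pmf ?p"
    have "A \<inter> A' = {}"
    proof (rule ccontr)
      assume "A \<inter> A' \<noteq> {}"
      then obtain f where fA: "f \<in> A" "f \<in> A'" by auto
      then have "\<forall>x. f x \<in> {-1,1}" using L unfolding A_def pm_valued_def by auto
      moreover have "\<forall>x. b x \<in> {-1,1}" using that F by auto
      ultimately show False using pair_bad[OF S _ _ R n] fA unfolding A_def A'_def by blast
    qed
    then have "measure_pmf.prob ?p A + measure_pmf.prob ?p A' = measure_pmf.prob ?p (A \<union> A')"
      by (simp add: measure_pmf.finite_measure_Union)
    also have "\<dots> \<le> 1" by simp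
    finally show ?thesis unfolding h_def A_def A'_def using embf[of b] by (simp add: measure_Int_set_pmf)
  qed
  have "(\<Sum>b\<in>F. h b) = (\<Sum>b\<in>F. h (flip R b))"
    by (rule sum.reindex_bij_witness[of _ "flip R" "flip R"]) (auto simp: flip2 flipF)
  then have "2 * (\<Sum>b\<in>F. h b) = (\<Sum>b\<in>F. h b + h (flip R b))" by (simp add: sum.distrib)
  also have "\<dots> \<le> (\<Sum>b\<in>F. 1)" by (rule sum_mono) (rule le1)
  finally show ?thesis unfolding h_def by simp
qed

theorem lemmaC2:
  fixes m :: nat
  assumes "m > 0" and "CARD('x::finite) = 2 * m"
  defines "S \<equiv> {s :: 'x \<Rightarrow> real option. \<forall>x. s x \<in> {Some 0, Some 1}}"
      and "B \<equiv> {b :: 'x \<Rightarrow> real option. \<forall>x. b x \<in> {Some (-1), Some 1}}"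
  shows "(\<forall>\<epsilon> \<delta>. \<epsilon> \<ge> 0 \<and> \<delta> \<ge> 0 \<longrightarrow> numCorM S B \<epsilon> \<delta> = 0)
       \<and> (\<forall>\<epsilon> \<delta> n. \<epsilon> \<in> {0<..<1/2} \<and> \<delta> \<in> {0<..<1/2} \<and>
            DCorM (measure_pmf (pmf_of_set (UNIV :: 'x set))) n B S \<epsilon> \<delta>
            \<longrightarrow> real n \<ge> (1/2 - \<epsilon>) * real m)"
proof (intro conjI allI impI)
  fix \<epsilon> \<delta> :: real assume "\<epsilon> \<ge> 0 \<and> \<delta> \<ge> 0"
  then have "CorM 0 S B \<epsilon> \<delta>" using CorM0[OF meta_eq_to_obj_eq[OF S_def] meta_eq_to_obj_eq[OF B_def]] by auto
  then show "numCorM S B \<epsilon> \<delta> = 0" unfolding numCorM_def by (rule Least_eq_0)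
next
  fix \<epsilon> \<delta> :: real and n :: nat
  assume a: "\<epsilon> \<in> {0<..<1/2} \<and> \<delta> \<in> {0<..<1/2} \<and> DCorM (measure_pmf (pmf_of_set (UNIV :: 'x set))) n B S \<epsilon> \<delta>"
  then obtain L where L: "\<forall>\<omega>. pm_valued (L \<omega>)"
    and Lg: "\<And>\<mu>. valid_dist \<mu> \<and> distr \<mu> (count_space UNIV) fst = measure_pmf (pmf_of_set UNIV) \<and> (\<exists>s\<in>B. det_realizes s \<mu>)
        \<Longrightarrow> success_prob n L \<mu> S \<epsilon> \<ge> ennreal (1 - \<delta>)"
    unfolding DCorM_def by blast
  show "real n \<ge> (1/2 - \<epsilon>) * real m"
  proof (rule ccontr)
    assume "\<not> ?thesis"
    then have nlt: "real n < (1/2 - \<epsilon>) * real m" by simp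
    define N where "N = real CARD('x)"
    have N: "N = 2 * real m" using assms(2) unfolding N_def by simp
    have n3: "3 * real n < real CARD('x) * (1 - 2 * \<epsilon>)"
    proof -
      have "3 * real n < 3 * ((1/2 - \<epsilon>) * real m)" using nlt by simp
      also have "\<dots> \<le> 4 * ((1/2 - \<epsilon>) * real m)" using a by (intro mult_right_mono) auto
      also have "\<dots> = N * (1 - 2 * \<epsilon>)" using N by (simp add: algebra_simps)
      finally show ?thesis unfolding N_def .
    qed
    define F where "F = {b :: 'x \<Rightarrow> real. \<forall>x. b x \<in> {-1,1}}"
    have "F = Pi\<^sub>E UNIV (\<lambda>_. {-1,1})" unfolding F_def by (auto simp: PiE_def Pi_def)
    then have finF: "finite F" by (simp add: finite_PiE)
    have "(\<lambda>_. 1) \<in> F" unfolding F_def by simp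
    then have cF: "card F > 0" using finF card_gt_0_iff by blast
    define \<Omega> where "\<Omega> = Pi\<^sub>E {..<n} (\<lambda>_. UNIV :: 'x set)"
    define c where "c = (1 / real CARD('x)) ^ n"
    define P where "P b xs = measure_pmf.prob (L (emb b n xs)) {f. good_output (mu b) S \<epsilon> f}" for b xs
    have Pnn: "P b xs \<ge> 0" for b xs unfolding P_def by simp
    have c0: "c \<ge> 0" unfolding c_def by simp
    have each: "1 - \<delta> \<le> (\<Sum>xs\<in>\<Omega>. P b xs) * c" if "b \<in> F" for b
    proof -
      have bb: "\<forall>x. b x \<in> {-1,1}" using that F_def by auto
      have "(\<lambda>x. Some (b x)) \<in> B" using bb unfolding B_def by auto
      then have "success_prob n L (mu b) S \<epsilon> \<ge> ennreal (1 - \<delta>)"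
        using Lg[of "mu b"] mu_valid[OF bb] mu_marg[of b] mu_det[of b] by blast
      then have "ennreal (1 - \<delta>) \<le> ennreal ((\<Sum>xs\<in>\<Omega>. P b xs) * c)"
        by (simp add: success_formula P_def \<Omega>_def c_def)
      moreover have "0 \<le> (\<Sum>xs\<in>\<Omega>. P b xs) * c" using Pnn c0 by (simp add: sum_nonneg)
      ultimately show ?thesis by (simp add: ennreal_le_iff)
    qed
    have "real (card F) * (1 - \<delta>) = (\<Sum>b\<in>F. 1 - \<delta>)" by simp
    also have "\<dots> \<le> (\<Sum>b\<in>F. (\<Sum>xs\<in>\<Omega>. P b xs) * c)" by (rule sum_mono) (rule each)
    also have "\<dots> = c * (\<Sum>xs\<in>\<Omega>. \<Sum>b\<in>F. P b xs)"
      by (simp add: sum_distrib_left sum_distrib_right sum.swap[of _ F] mult.commute)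
    also have "\<dots> \<le> c * (\<Sum>xs\<in>\<Omega>. real (card F) / 2)"
      using c0 by (intro mult_left_mono sum_mono) (use pair_sum[OF meta_eq_to_obj_eq[OF S_def] L n3 F_def] P_def in auto)
    also have "\<dots> = (c * real (card \<Omega>)) * (real (card F) / 2)" by simp
    also have "c * real (card \<Omega>) = 1"
      unfolding c_def \<Omega>_def by (simp add: card_PiE power_one_over field_simps)
    finally have "real (card F) * (1 - \<delta>) \<le> real (card F) / 2" by simp
    then show False using cF a by (simp add: field_simps)
  qed
qed


end
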